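(* Let $M$ have constant sectional curvature $c\in\mathbb{R}$ and let $b_0,b_1,b_2,b_3\in\mathbb{R}$ be constants with $b_0b_2-b_1^2-b_3^2=-1$ (equivalently $\omega\wedge\omega=(d\theta)^2$), where $\omega=b_0\alpha_0+b_1\alpha_1+b_2\alpha_2+b_3\,d\theta$. Then the 3-form $\varphi=\theta\wedge\omega$ on $T^1M$ is a calibration if and only if $$b_0+b_2=0,\qquad b_0^2+b_1^2=1,\qquad b_3=0.$$
   Context: Let $(M,g)$ be an oriented Riemannian 3-manifold with Levi-Civita connection $\nabla$ and unit tangent sphere bundle $\pi:T^1M\to M$, endowed with (the restriction of) the Sasaki metric $g^S$: the metric on $TM$ for which the splitting $T(TM)=H^\nabla\oplus V$ into the $\nabla$-horizontal and vertical subspaces is orthogonal and both $d\pi|_{H^\nabla}$ and the canonical identification of $V$ with $T_{\pi(u)}M$ are isometries. Let $B$ be the mirror map on $T(TM)$ sending the horizontal lift of a vector to its vertical lift and vertical vectors to $0$. An adapted orthonormal frame at $u\in T^1M$ is $e_0,\dots,e_4$, where $e_0$ is the geodesic spray (the horizontal lift of $u$), $e_1,e_2$ are horizontal lifts of an orthonormal basis of $u^\perp\subset T_{\pi(u)}M$ with $(u,d\pi e_1,d\pi e_2)$ positively oriented, $e_3=Be_1$, $e_4=Be_2$; $T^1M$ is oriented by $e^0\wedge\cdots\wedge e^4$. With $e^0,\dots,e^4$ the dual coframe and $e^{ij}=e^i\wedge e^j$, set $\theta=e^0$ and the globally defined 2-forms $\alpha_0=e^{12}$, $\alpha_1=e^{14}-e^{23}$,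 $\alpha_2=e^{34}$; then $d\theta=e^{31}+e^{42}$. If $M$ has constant sectional curvature $c$, then $d\alpha_0=\theta\wedge\alpha_1$, $d\alpha_1=2\theta\wedge\alpha_2-2c\,\theta\wedge\alpha_0$, $d\alpha_2=-c\,\theta\wedge\alpha_1$. A calibration is a closed differential form of comass one, i.e. its value on every unit simple $k$-vector is at most $1$, with the value $1$ attained (at least as a supremum) at every point. *)

theory Defs
  imports "HOL-Analysis.Analysis"
begin

text \<open>At a point u of T^1M the tangent space is identified with
  real^5 via the adapted orthonormal frame e_0,...,e_4 (Sasaki metric = Euclidean inner
  product in these coordinates); the dual coframe is e^i(v) = v$i.  All forms below have
  constant coefficients in adapted coframes, so their values are the same at every point.
  k-forms are represented as alternating multilinear functions of k tangent vectors, with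
  the determinant normalization (e^i wedge e^j)(u,v) = u_i v_j - u_j v_i.\<close>

type_synonym tvec = "real^5"
type_synonym form1 = "tvec \<Rightarrow> real"
type_synonym form2 = "tvec \<Rightarrow> tvec \<Rightarrow> real"
type_synonym form3 = "tvec \<Rightarrow> tvec \<Rightarrow> tvec \<Rightarrow> real"
type_synonym form4 = "tvec \<Rightarrow> tvec \<Rightarrow> tvec \<Rightarrow> tvec \<Rightarrow> real"

definition cof :: "5 \<Rightarrow> form1" where "cof i v = v $ i"

definition e2 :: "5 \<Rightarrow> 5 \<Rightarrow> form2" where
  "e2 i j u v = u $ i * v $ j - u $ j * v $ i"

definition wedge11 :: "form1 \<Rightarrow> form1 \<Rightarrow> form2" where
  "wedge11 a b u v = a u * b v - a v * b u"

definition wedge12 :: "form1 \<Rightarrow> form2 \<Rightarrow> form3" where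
  "wedge12 a B u v w = a u * B v w - a v * B u w + a w * B u v"

definition wedge13 :: "form1 \<Rightarrow> form3 \<Rightarrow> form4" where
  "wedge13 a X u1 u2 u3 u4 =
     a u1 * X u2 u3 u4 - a u2 * X u1 u3 u4 + a u3 * X u1 u2 u4 - a u4 * X u1 u2 u3"

definition wedge22 :: "form2 \<Rightarrow> form2 \<Rightarrow> form4" where
  "wedge22 B C u1 u2 u3 u4 =
       B u1 u2 * C u3 u4 - B u1 u3 * C u2 u4 + B u1 u4 * C u2 u3
     + B u2 u3 * C u1 u4 - B u2 u4 * C u1 u3 + B u3 u4 * C u1 u2"

definition add2 :: "form2 \<Rightarrow> form2 \<Rightarrow> form2" where "add2 B C u v = B u v + C u v"
definition scal2 :: "real \<Rightarrow> form2 \<Rightarrow> form2" where "scal2 r B u v = r * B u v"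
definition sub4 :: "form4 \<Rightarrow> form4 \<Rightarrow> form4" where
  "sub4 X Y u1 u2 u3 u4 = X u1 u2 u3 u4 - Y u1 u2 u3 u4"

definition theta :: form1 where "theta = cof 0"
definition dtheta :: form2 where "dtheta = add2 (e2 3 1) (e2 4 2)"
definition alpha0 :: form2 where "alpha0 = e2 1 2"
definition alpha1 :: form2 where "alpha1 = add2 (e2 1 4) (scal2 (-1) (e2 2 3))"
definition alpha2 :: form2 where "alpha2 = e2 3 4"

definition omega :: "real \<Rightarrow> real \<Rightarrow> real \<Rightarrow> real \<Rightarrow> form2" where
  "omega b0 b1 b2 b3 =
     add2 (add2 (scal2 b0 alpha0) (scal2 b1 alpha1)) (add2 (scal2 b2 alpha2) (scal2 b3 dtheta))"

definition phi :: "real \<Rightarrow> real \<Rightarrow> real \<Rightarrow> real \<Rightarrow> form3" where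
  "phi b0 b1 b2 b3 = wedge12 theta (omega b0 b1 b2 b3)"

text \<open>Exterior derivatives for constant curvature c, from the structure equations
  d alpha_0 = theta ^ alpha_1, d alpha_1 = 2 theta ^ alpha_2 - 2c theta ^ alpha_0,
  d alpha_2 = -c theta ^ alpha_1, d(d theta) = 0, extended by linearity (constant
  coefficients) and the Leibniz rule d(theta ^ omega) = d theta ^ omega - theta ^ d omega.\<close>
definition domega :: "real \<Rightarrow> real \<Rightarrow> real \<Rightarrow> real \<Rightarrow> real \<Rightarrow> form3" where
  "domega c b0 b1 b2 b3 = wedge12 theta
     (add2 (add2 (scal2 b0 alpha1) (scal2 b1 (add2 (scal2 2 alpha2) (scal2 (-2*c) alpha0))))
           (scal2 b2 (scal2 (-c) alpha1)))"

definition dphi :: "real \<Rightarrow> real \<Rightarrow> real \<Rightarrow> real \<Rightarrow> real \<Rightarrow> form4" where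
  "dphi c b0 b1 b2 b3 =
     sub4 (wedge22 dtheta (omega b0 b1 b2 b3)) (wedge13 theta (domega c b0 b1 b2 b3))"

text \<open>Squared norm of the simple 3-vector u^v^w: the Gram determinant.\<close>
definition gram3 :: "tvec \<Rightarrow> tvec \<Rightarrow> tvec \<Rightarrow> real" where
  "gram3 u v w =
     (u\<bullet>u) * ((v\<bullet>v) * (w\<bullet>w) - (v\<bullet>w) * (w\<bullet>v))
   - (u\<bullet>v) * ((v\<bullet>u) * (w\<bullet>w) - (v\<bullet>w) * (w\<bullet>u))
   + (u\<bullet>w) * ((v\<bullet>u) * (w\<bullet>v) - (v\<bullet>v) * (w\<bullet>u))"

definition is_calibration3 :: "form3 \<Rightarrow> form4 \<Rightarrow> bool" where
  "is_calibration3 f df \<longleftrightarrow>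
     (\<forall>u1 u2 u3 u4. df u1 u2 u3 u4 = 0) \<and>
     (\<forall>u v w. gram3 u v w = 1 \<longrightarrow> f u v w \<le> 1) \<and>
     (\<forall>\<epsilon>>0. \<exists>u v w. gram3 u v w = 1 \<and> f u v w > 1 - \<epsilon>)"

end

theory Submission
  imports Defs
begin

definition pm :: "real\<Rightarrow>real\<Rightarrow>real\<Rightarrow>real\<Rightarrow>real\<Rightarrow>real\<Rightarrow>real\<Rightarrow>real\<Rightarrow>real\<Rightarrow>real" where
 "pm ui uj uk vi vj vk wi wj wk = ui * (vj * wk - vk * wj) - uj * (vi * wk - vk * wi) + uk * (vi * wj - vj * wi)"

lemma exhaust_5: fixes x :: 5 shows "x = 0 \<or> x = 1 \<or> x = 2 \<or> x = 3 \<or> x = 4"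
proof (induct x)
  case (of_int z)
  then have "z = 0 \<or> z = 1 \<or> z = 2 \<or> z = 3 \<or> z = 4" by fastforce
  then show ?case by auto
qed
lemma UNIV_5: "UNIV = {0,1, 2, 3, 4::5}" using exhaust_5 by auto
lemma sum_5: "sum f (UNIV::5 set) = f 0 + f 1 + f 2 + f 3 + f 4"
  unfolding UNIV_5 by (simp add: ac_simps)

lemma plucker: "pm u0 u1 u2 v0 v1 v2 w0 w1 w2  *  pm u0 u3 u4 v0 v3 v4 w0 w3 w4
  - pm u0 u1 u3 v0 v1 v3 w0 w1 w3  *  pm u0 u2 u4 v0 v2 v4 w0 w2 w4
  + pm u0 u1 u4 v0 v1 v4 w0 w1 w4  *  pm u0 u2 u3 v0 v2 v3 w0 w2 w3 = 0"
  unfolding pm_def by algebra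

lemma cb: fixes u0 u1 u2 u3 u4 v0 v1 v2 v3 v4 w0 w1 w2 w3 w4 :: real
  defines "uu \<equiv> u0 * u0+u1 * u1+u2 * u2+u3 * u3+u4 * u4"
  and "uv \<equiv> u0 * v0+u1 * v1+u2 * v2+u3 * v3+u4 * v4"
  and "uw \<equiv> u0 * w0+u1 * w1+u2 * w2+u3 * w3+u4 * w4"
  and "vv \<equiv> v0 * v0+v1 * v1+v2 * v2+v3 * v3+v4 * v4"
  and "vw \<equiv> v0 * w0+v1 * w1+v2 * w2+v3 * w3+v4 * w4"
  and "ww \<equiv> w0 * w0+w1 * w1+w2 * w2+w3 * w3+w4 * w4"
  shows "uu  *  (vv * ww - vw * vw) - uv * (uv * ww - vw * uw) + uw * (uv * vw - vv * uw) =
   (pm u0 u1 u2 v0 v1 v2 w0 w1 w2)^2 + (pm u0 u1 u3 v0 v1 v3 w0 w1 w3)^2 + (pm u0 u1 u4 v0 v1 v4 w0 w1 w4)^2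
 + (pm u0 u2 u3 v0 v2 v3 w0 w2 w3)^2 + (pm u0 u2 u4 v0 v2 v4 w0 w2 w4)^2 + (pm u0 u3 u4 v0 v3 v4 w0 w3 w4)^2
 + (pm u1 u2 u3 v1 v2 v3 w1 w2 w3)^2 + (pm u1 u2 u4 v1 v2 v4 w1 w2 w4)^2 + (pm u1 u3 u4 v1 v3 v4 w1 w3 w4)^2
 + (pm u2 u3 u4 v2 v3 v4 w2 w3 w4)^2"
  unfolding pm_def assms by algebra


lemma phi_eq: "phi b0 b1 b2 b3 u v w =
   b0 * pm (u$0) (u$1) (u$2) (v$0) (v$1) (v$2) (w$0) (w$1) (w$2)
 + b1 * (pm (u$0) (u$1) (u$4) (v$0) (v$1) (v$4) (w$0) (w$1) (w$4) - pm (u$0) (u$2) (u$3) (v$0) (v$2) (v$3) (w$0) (w$2) (w$3))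
 + b2 * pm (u$0) (u$3) (u$4) (v$0) (v$3) (v$4) (w$0) (w$3) (w$4)
 + b3 * (pm (u$0) (u$3) (u$1) (v$0) (v$3) (v$1) (w$0) (w$3) (w$1) + pm (u$0) (u$4) (u$2) (v$0) (v$4) (v$2) (w$0) (w$4) (w$2))"
  unfolding phi_def wedge12_def omega_def add2_def scal2_def alpha0_def alpha1_def alpha2_def dtheta_def e2_def theta_def cof_def pm_def
  by (simp add: algebra_simps)

lemma gram_eq: "gram3 u v w =
   (pm (u$0) (u$1) (u$2) (v$0) (v$1) (v$2) (w$0) (w$1) (w$2))^2 + (pm (u$0) (u$1) (u$3) (v$0) (v$1) (v$3) (w$0) (w$1) (w$3))^2 + (pm (u$0) (u$1) (u$4) (v$0) (v$1) (v$4) (w$0) (w$1) (w$4))^2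
 + (pm (u$0) (u$2) (u$3) (v$0) (v$2) (v$3) (w$0) (w$2) (w$3))^2 + (pm (u$0) (u$2) (u$4) (v$0) (v$2) (v$4) (w$0) (w$2) (w$4))^2 + (pm (u$0) (u$3) (u$4) (v$0) (v$3) (v$4) (w$0) (w$3) (w$4))^2
 + (pm (u$1) (u$2) (u$3) (v$1) (v$2) (v$3) (w$1) (w$2) (w$3))^2 + (pm (u$1) (u$2) (u$4) (v$1) (v$2) (v$4) (w$1) (w$2) (w$4))^2 + (pm (u$1) (u$3) (u$4) (v$1) (v$3) (v$4) (w$1) (w$3) (w$4))^2
 + (pm (u$2) (u$3) (u$4) (v$2) (v$3) (v$4) (w$2) (w$3) (w$4))^2"
  unfolding gram3_def inner_commute[of v u] inner_commute[of w u] inner_commute[of w v]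
  unfolding inner_vec_def sum_5 inner_real_def
  by (rule cb)

lemma bound:
  assumes "b0^2 + b1^2 = 1"
  shows "(phi b0 b1 (-b0) 0 u v w)^2 \<le> gram3 u v w"
proof -
  define p012 where "p012 = pm (u$0) (u$1) (u$2) (v$0) (v$1) (v$2) (w$0) (w$1) (w$2)"
  define p013 where "p013 = pm (u$0) (u$1) (u$3) (v$0) (v$1) (v$3) (w$0) (w$1) (w$3)"
  define p014 where "p014 = pm (u$0) (u$1) (u$4) (v$0) (v$1) (v$4) (w$0) (w$1) (w$4)"
  define p023 where "p023 = pm (u$0) (u$2) (u$3) (v$0) (v$2) (v$3) (w$0) (w$2) (w$3)"
  define p024 where "p024 = pm (u$0) (u$2) (u$4) (v$0) (v$2) (v$4) (w$0) (w$2) (w$4)"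
  define p034 where "p034 = pm (u$0) (u$3) (u$4) (v$0) (v$3) (v$4) (w$0) (w$3) (w$4)"
  define p123 where "p123 = pm (u$1) (u$2) (u$3) (v$1) (v$2) (v$3) (w$1) (w$2) (w$3)"
  define p124 where "p124 = pm (u$1) (u$2) (u$4) (v$1) (v$2) (v$4) (w$1) (w$2) (w$4)"
  define p134 where "p134 = pm (u$1) (u$3) (u$4) (v$1) (v$3) (v$4) (w$1) (w$3) (w$4)"
  define p234 where "p234 = pm (u$2) (u$3) (u$4) (v$2) (v$3) (v$4) (w$2) (w$3) (w$4)"
  have ph: "phi b0 b1 (-b0) 0 u v w = b0 * (p012 - p034) + b1 * (p014 - p023)"
    unfolding phi_eq p012_def p034_def p014_def p023_def by (simp add: algebra_simps)
  have g: "gram3 u v w = p012^2+p013^2+p014^2+p023^2+p024^2+p034^2+p123^2+p124^2+p134^2+p234^2"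
    unfolding gram_eq p012_def p013_def p014_def p023_def p024_def p034_def p123_def p124_def p134_def p234_def
    by simp
  have pl: "p012 * p034 - p013 * p024 + p014 * p023 = 0"
    unfolding p012_def p013_def p014_def p023_def p024_def p034_def by (rule plucker)
  have "gram3 u v w - (phi b0 b1 (-b0) 0 u v w)^2 =
     (b1 * (p012 - p034) - b0 * (p014 - p023))^2 + (p013 + p024)^2 + p123^2+p124^2+p134^2+p234^2"
    unfolding ph g using pl assms by algebra
  moreover have "(b1 * (p012 - p034) - b0 * (p014 - p023))^2 + (p013 + p024)^2 + p123^2+p124^2+p134^2+p234^2 \<ge> 0"
    by simp
  ultimately show ?thesis by linarith
qed


lemma closed_iff: "dphi c b0 b1 b2 b3 (axis 3 1) (axis 1 1) (axis 4 1) (axis 2 1) = 0 \<Longrightarrow> b3 = 0"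
  unfolding dphi_def sub4_def wedge22_def wedge13_def domega_def wedge12_def omega_def add2_def scal2_def alpha0_def alpha1_def alpha2_def dtheta_def e2_def theta_def cof_def
  by (simp add: axis_def)

lemma closed0: "dphi c b0 b1 b2 0 u1 u2 u3 u4 = 0"
  unfolding dphi_def sub4_def wedge22_def wedge13_def domega_def wedge12_def omega_def add2_def scal2_def alpha0_def alpha1_def alpha2_def dtheta_def e2_def theta_def cof_def
  by (simp add: algebra_simps)

definition wv :: "real \<Rightarrow> real \<Rightarrow> 5 \<Rightarrow> 5 \<Rightarrow> tvec" where
  "wv x y i j = (\<chi> k. if k = i then x else if k = j then y else 0)"

lemma test1: "phi b0 b1 b2 b3 (axis 0 1) (axis 1 1) (wv (t*b0) (t*b1) 2 4) = t*(b0^2+b1^2)"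
  unfolding phi_eq pm_def wv_def by (simp add: axis_def power2_eq_square algebra_simps)
lemma test2: "gram3 (axis 0 1) (axis 1 1) (wv (t*b0) (t*b1) 2 4) = t^2*(b0^2+b1^2)"
  unfolding gram_eq pm_def wv_def by (simp add: axis_def power2_eq_square algebra_simps)
lemma test3: "phi b0 b1 b2 b3 (axis 0 1) (axis 3 1) (wv (t*b1) (t*b2) 2 4) = t*(b1^2+b2^2)"
  unfolding phi_eq pm_def wv_def by (simp add: axis_def power2_eq_square algebra_simps)
lemma test4: "gram3 (axis 0 1) (axis 3 1) (wv (t*b1) (t*b2) 2 4) = t^2*(b1^2+b2^2)"
  unfolding gram_eq pm_def wv_def by (simp add: axis_def power2_eq_square algebra_simps)

lemma scale_le1:
  fixes s :: real
  assumes B: "\<And>t. t^2 * s = 1 \<Longrightarrow> t * s \<le> 1" and s0: "s \<ge> 0"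
  shows "s \<le> 1"
proof (cases "s = 0")
  case False
  then have sp: "s > 0" using s0 by simp
  define t where "t = 1 / sqrt s"
  have "t^2 * s = 1" unfolding t_def using sp by (simp add: power_divide)
  then have "t * s \<le> 1" by (rule B)
  moreover have "t * s = sqrt s" unfolding t_def using sp
    by (simp add: real_div_sqrt)
  ultimately have "sqrt s \<le> 1" by simp
  then show ?thesis by simp
qed simp

theorem proposition2p1:
  fixes c b0 b1 b2 b3 :: real
  assumes "b0 * b2 - b1 ^ 2 - b3 ^ 2 = -1"
  shows "is_calibration3 (phi b0 b1 b2 b3) (dphi c b0 b1 b2 b3) \<longleftrightarrow>
         (b0 + b2 = 0 \<and> b0 ^ 2 + b1 ^ 2 = 1 \<and> b3 = 0)"
proof
  assume cal: "is_calibration3 (phi b0 b1 b2 b3) (dphi c b0 b1 b2 b3)"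
  then have b3: "b3 = 0" unfolding is_calibration3_def using closed_iff by blast
  from cal have B: "\<And>u v w. gram3 u v w = 1 \<Longrightarrow> phi b0 b1 b2 b3 u v w \<le> 1"
    unfolding is_calibration3_def by blast
  have s1: "b0^2 + b1^2 \<le> 1"
  proof (rule scale_le1)
    fix t :: real assume "t^2 * (b0^2+b1^2) = 1"
    then show "t * (b0^2+b1^2) \<le> 1" using B[of "axis 0 1" "axis 1 1" "wv (t*b0) (t*b1) 2 4"] test1 test2 by simp
  qed simp
  have s2: "b1^2 + b2^2 \<le> 1"
  proof (rule scale_le1)
    fix t :: real assume "t^2 * (b1^2+b2^2) = 1"
    then show "t * (b1^2+b2^2) \<le> 1" using B[of "axis 0 1" "axis 3 1" "wv (t*b1) (t*b2) 2 4"] test3 test4 by simp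
  qed simp
  have "(b0+b2)^2 \<le> 0" using s1 s2 assms b3 by (simp add: power2_eq_square algebra_simps)
  then have e: "b0 + b2 = 0" by simp
  then have "b2 = -b0" by simp
  with e show "b0 + b2 = 0 \<and> b0 ^ 2 + b1 ^ 2 = 1 \<and> b3 = 0"
    using assms b3 by (simp add: power2_eq_square algebra_simps)
next
  assume h: "b0 + b2 = 0 \<and> b0 ^ 2 + b1 ^ 2 = 1 \<and> b3 = 0"
  then have b2: "b2 = -b0" and n: "b0^2 + b1^2 = 1" and b3: "b3 = 0" by auto
  show "is_calibration3 (phi b0 b1 b2 b3) (dphi c b0 b1 b2 b3)"
    unfolding is_calibration3_def b2 b3
  proof (intro conjI allI impI)
    fix u1 u2 u3 u4 show "dphi c b0 b1 (- b0) 0 u1 u2 u3 u4 = 0" by (rule closed0)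
  next
    fix u v w assume g: "gram3 u v w = 1"
    have "(phi b0 b1 (- b0) 0 u v w)^2 \<le> 1" using bound[OF n, of u v w] g by simp
    then show "phi b0 b1 (- b0) 0 u v w \<le> 1"
      by (metis abs_le_D1 abs_square_le_1)
  next
    fix e :: real assume "e > 0"
    have "gram3 (axis 0 1) (axis 1 1) (wv (1*b0) (1*b1) 2 4) = 1" using test2[of 1 b0 b1] n by simp
    moreover have "phi b0 b1 (- b0) 0 (axis 0 1) (axis 1 1) (wv (1*b0) (1*b1) 2 4) = 1"
      using test1[of b0 b1 "-b0" 0 1] n by simp
    ultimately show "\<exists>u v w. gram3 u v w = 1 \<and> 1 - e < phi b0 b1 (- b0) 0 u v w"
      using \<open>e > 0\<close> by (intro exI[of _ "axis 0 1"] exI[of _ "axis 1 1"] exI[of _ "wv (1*b0) (1*b1) 2 4"]) simp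
  qed
qed


end
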